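(* Let $H_1$ and $H_2$ be finite-dimensional Hilbert spaces and let $G\in L(H_1,H_2)$ with $\|G\|=1$ be a relative spear operator. Then $G$ is a partial isometry.
   Context: For a norm-one $G\in L(X,Y)$ and $T\in L(X,Y)$ ($X,Y$ Banach spaces, $S_X$ the unit sphere): $\|T\|_G := \inf_{\delta>0}\sup\{\|Tx\|: x\in S_X,\ \|Gx\|>1-\delta\}$; $V_G(T):=\bigcap_{\delta>0}\overline{\{y^*(Tx): x\in S_X,\ y^*\in S_{Y^*},\ \operatorname{Re} y^*(Gx)>1-\delta\}}$ and $\nu_G(T):=\max\{|\lambda|:\lambda\in V_G(T)\}$. $G$ is called a relative spear operator if $\nu_G(T)=\|T\|_G$ for all $T\in L(X,Y)$. A partial isometry is an operator $G$ with $G^*G$ an orthogonal projection. *)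

theory Defs
  imports "HOL-Analysis.Analysis"
begin

definition rel_norm :: "('a::real_normed_vector \<Rightarrow> 'b::real_normed_vector) \<Rightarrow> ('a \<Rightarrow> 'b) \<Rightarrow> real" where
  "rel_norm G T = (INF \<delta>\<in>{0<..}. Sup {norm (T x) | x. norm x = 1 \<and> norm (G x) > 1 - \<delta>})"

definition dual_sphere_R :: "('b::real_normed_vector \<Rightarrow> real) set" where
  "dual_sphere_R = {f. bounded_linear f \<and> onorm f = 1}"

definition num_range_R :: "('a::real_normed_vector \<Rightarrow> 'b::real_normed_vector) \<Rightarrow> ('a \<Rightarrow> 'b) \<Rightarrow> real set" where
  "num_range_R G T = (\<Inter>\<delta>\<in>{0<..}. closure
     {f (T x) | x f. norm x = 1 \<and> f \<in> dual_sphere_R \<and> f (G x) > 1 - \<delta>})"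

definition num_radius_R :: "('a::real_normed_vector \<Rightarrow> 'b::real_normed_vector) \<Rightarrow> ('a \<Rightarrow> 'b) \<Rightarrow> real" where
  "num_radius_R G T = Sup (abs ` num_range_R G T)"

definition rel_spear_R :: "('a::real_normed_vector \<Rightarrow> 'b::real_normed_vector) \<Rightarrow> bool" where
  "rel_spear_R G \<longleftrightarrow> (\<forall>T. bounded_linear T \<longrightarrow> num_radius_R G T = rel_norm G T)"

definition orth_proj_R :: "('a::real_inner \<Rightarrow> 'a) \<Rightarrow> bool" where
  "orth_proj_R P \<longleftrightarrow> linear P \<and> P \<circ> P = P \<and> (\<forall>x y. inner (P x) y = inner x (P y))"

definition partial_isometry_R :: "('a::real_inner \<Rightarrow> 'b::real_inner) \<Rightarrow> bool" where
  "partial_isometry_R G \<longleftrightarrow> orth_proj_R (adjoint G \<circ> G)"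

section \<open>Complex finite-dimensional Hilbert spaces, modelled as complex^'n with the
  standard inner product (the vector norm on complex^'n is the Hilbert norm)\<close>

definition cinner :: "complex ^ 'n \<Rightarrow> complex ^ 'n \<Rightarrow> complex" where
  "cinner x y = (\<Sum>i\<in>UNIV. x $ i * cnj (y $ i))"

definition clinear_op :: "(complex ^ 'n \<Rightarrow> complex ^ 'm) \<Rightarrow> bool" where
  "clinear_op T \<longleftrightarrow> bounded_linear T \<and> (\<forall>c x. T (c *s x) = c *s T x)"

definition dual_sphere_C :: "(complex ^ 'm \<Rightarrow> complex) set" where
  "dual_sphere_C = {f. bounded_linear f \<and> (\<forall>c x. f (c *s x) = c * f x) \<and> onorm f = 1}"

definition num_range_C :: "(complex ^ 'n \<Rightarrow> complex ^ 'm) \<Rightarrow> (complex ^ 'n \<Rightarrow> complex ^ 'm) \<Rightarrow> complex set" where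
  "num_range_C G T = (\<Inter>\<delta>\<in>{0<..}. closure
     {f (T x) | x f. norm x = 1 \<and> f \<in> dual_sphere_C \<and> Re (f (G x)) > 1 - \<delta>})"

definition num_radius_C :: "(complex ^ 'n \<Rightarrow> complex ^ 'm) \<Rightarrow> (complex ^ 'n \<Rightarrow> complex ^ 'm) \<Rightarrow> real" where
  "num_radius_C G T = Sup (cmod ` num_range_C G T)"

definition rel_spear_C :: "(complex ^ 'n \<Rightarrow> complex ^ 'm) \<Rightarrow> bool" where
  "rel_spear_C G \<longleftrightarrow> (\<forall>T. clinear_op T \<longrightarrow> num_radius_C G T = rel_norm G T)"

definition cadjoint :: "(complex ^ 'n \<Rightarrow> complex ^ 'm) \<Rightarrow> complex ^ 'm \<Rightarrow> complex ^ 'n" where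
  "cadjoint G = (\<lambda>y. SOME z. \<forall>x. cinner (G x) y = cinner x z)"

definition orth_proj_C :: "(complex ^ 'n \<Rightarrow> complex ^ 'n) \<Rightarrow> bool" where
  "orth_proj_C P \<longleftrightarrow> clinear_op P \<and> P \<circ> P = P \<and> (\<forall>x y. cinner (P x) y = cinner x (P y))"

definition partial_isometry_C :: "(complex ^ 'n \<Rightarrow> complex ^ 'm) \<Rightarrow> bool" where
  "partial_isometry_C G \<longleftrightarrow> orth_proj_C (cadjoint G \<circ> G)"

end

theory Submission
  imports Defs
begin

lemma normG_le:
  assumes "bounded_linear G" "onorm G = 1"
  shows "norm (G v) \<le> norm v"
  using onorm[OF assms(1), of v] assms(2) by simp

lemma normH_le:
  fixes G :: "'a::euclidean_space \<Rightarrow> 'b::euclidean_space"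
  assumes bl: "bounded_linear G" and nG: "\<And>v. norm (G v) \<le> norm v"
  shows "norm (adjoint G y) \<le> norm y"
proof -
  have lin: "linear G" using bl bounded_linear.linear by blast
  have "norm (adjoint G y) ^ 2 = adjoint G y \<bullet> adjoint G y" by (simp add: power2_norm_eq_inner)
  also have "\<dots> = G (adjoint G y) \<bullet> y" using adjoint_clauses(1)[OF lin] by simp
  also have "\<dots> \<le> norm (G (adjoint G y)) * norm y" by (rule norm_cauchy_schwarz)
  also have "\<dots> \<le> norm (adjoint G y) * norm y" using nG by (simp add: mult_right_mono)
  finally have h: "norm (adjoint G y) ^ 2 \<le> norm (adjoint G y) * norm y" .
  show ?thesis
  proof (cases "norm (adjoint G y) = 0")
    case True then show ?thesis by simp
  next
    case False
    then have "norm (adjoint G y) > 0" by simp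
    with h show ?thesis by (simp add: power2_eq_square)
  qed
qed

lemma key_ineq:
  fixes G :: "'a::euclidean_space \<Rightarrow> 'b::euclidean_space"
  assumes bl: "bounded_linear G" and nG: "\<And>v. norm (G v) \<le> norm v"
  shows "\<bar>G x \<bullet> (G z - G (adjoint G (G z)))\<bar> \<le> sqrt (norm x ^ 2 - norm (G x) ^ 2) * norm z"
proof -
  have lin: "linear G" using bl bounded_linear.linear by blast
  let ?H = "adjoint G"
  have nH: "norm (?H y) \<le> norm y" for y using normH_le[OF bl nG] .
  have ad1: "u \<bullet> ?H y = G u \<bullet> y" for u y using adjoint_clauses(1)[OF lin] .
  have ad2: "?H y \<bullet> u = y \<bullet> G u" for u y using adjoint_clauses(2)[OF lin] .
  have e1: "G x \<bullet> (G z - G (?H (G z))) = (x - ?H (G x)) \<bullet> ?H (G z)"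
  proof -
    have "G x \<bullet> (G z - G (?H (G z))) = G x \<bullet> G z - G x \<bullet> G (?H (G z))"
      by (simp add: inner_diff_right)
    also have "\<dots> = x \<bullet> ?H (G z) - ?H (G x) \<bullet> ?H (G z)"
      using ad1[of x "G z"] ad2[of "G x" "?H (G z)"] by simp
    also have "\<dots> = (x - ?H (G x)) \<bullet> ?H (G z)" by (simp add: inner_diff_left)
    finally show ?thesis .
  qed
  have e2: "norm (x - ?H (G x)) ^ 2 \<le> norm x ^ 2 - norm (G x) ^ 2"
  proof -
    have "norm (x - ?H (G x)) ^ 2 = x \<bullet> x - 2 * (x \<bullet> ?H (G x)) + ?H (G x) \<bullet> ?H (G x)"
      by (simp add: power2_norm_eq_inner inner_diff_left inner_diff_right inner_commute)
    also have "x \<bullet> ?H (G x) = norm (G x) ^ 2" using ad1[of x "G x"] by (simp add: power2_norm_eq_inner)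
    also have "?H (G x) \<bullet> ?H (G x) = norm (?H (G x)) ^ 2" by (simp add: power2_norm_eq_inner)
    also have "norm (?H (G x)) ^ 2 \<le> norm (G x) ^ 2" using nH[of "G x"] by (simp add: power_mono)
    finally show ?thesis by (simp add: power2_norm_eq_inner)
  qed
  have "\<bar>G x \<bullet> (G z - G (?H (G z)))\<bar> \<le> norm (x - ?H (G x)) * norm (?H (G z))"
    unfolding e1 by (rule Cauchy_Schwarz_ineq2)
  also have "\<dots> \<le> sqrt (norm x ^ 2 - norm (G x) ^ 2) * norm z"
  proof (rule mult_mono)
    show "norm (x - ?H (G x)) \<le> sqrt (norm x ^ 2 - norm (G x) ^ 2)"
      using e2 real_le_rsqrt by blast
    show "norm (?H (G z)) \<le> norm z" using nH[of "G z"] nG[of z] by linarith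
  qed (use nG in auto)
  finally show ?thesis .
qed

lemma riesz_est:
  fixes g :: "'b::euclidean_space \<Rightarrow> real"
  assumes bl: "bounded_linear g" and ng: "\<And>y. \<bar>g y\<bar> \<le> norm y"
    and nu: "norm u \<le> 1" and gu: "g u > 1 - \<delta>"
  shows "\<bar>g v\<bar> \<le> \<bar>v \<bullet> u\<bar> + norm v * sqrt (2 * \<delta>)"
proof -
  have lin: "linear g" using bl bounded_linear.linear by blast
  define z where "z = adjoint g 1"
  have gz: "g y = y \<bullet> z" for y using adjoint_clauses(1)[OF lin, of y 1] by (simp add: z_def)
  have "norm z ^ 2 = g z" by (simp add: gz power2_norm_eq_inner)
  also have "\<dots> \<le> norm z" using ng[of z] by simp
  finally have "norm z ^ 2 \<le> norm z" .
  then have nz: "norm z \<le> 1"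
  proof -
    assume h: "norm z ^ 2 \<le> norm z"
    show ?thesis
    proof (rule ccontr)
      assume "\<not> norm z \<le> 1"
      then have "norm z * 1 < norm z * norm z" by (intro mult_strict_left_mono) auto
      then show False using h by (simp add: power2_eq_square)
    qed
  qed
  have "norm (z - u) ^ 2 = norm z ^ 2 - 2 * (u \<bullet> z) + norm u ^ 2"
    by (simp add: power2_norm_eq_inner inner_diff_left inner_diff_right inner_commute)
  also have "\<dots> \<le> 2 * \<delta>"
  proof -
    have "norm z ^ 2 \<le> 1" using nz by (simp add: power_le_one)
    moreover have "norm u ^ 2 \<le> 1" using nu by (simp add: power_le_one)
    moreover have "u \<bullet> z > 1 - \<delta>" using gu gz by simp
    ultimately show ?thesis by linarith
  qed
  finally have nzu: "norm (z - u) \<le> sqrt (2 * \<delta>)" using real_le_rsqrt by blast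
  have "\<bar>g v\<bar> = \<bar>v \<bullet> u + v \<bullet> (z - u)\<bar>" by (simp add: gz inner_diff_right)
  also have "\<dots> \<le> \<bar>v \<bullet> u\<bar> + \<bar>v \<bullet> (z - u)\<bar>" by (rule abs_triangle_ineq)
  also have "\<bar>v \<bullet> (z - u)\<bar> \<le> norm v * norm (z - u)" by (rule Cauchy_Schwarz_ineq2)
  also have "\<dots> \<le> norm v * sqrt (2 * \<delta>)" using nzu by (simp add: mult_left_mono)
  finally show ?thesis by simp
qed

lemma exists_x0:
  fixes G :: "'a::euclidean_space \<Rightarrow> 'b::euclidean_space"
  assumes bl: "bounded_linear G" and o: "onorm G = 1"
  shows "\<exists>x0. norm x0 = 1 \<and> norm (G x0) = 1"
proof -
  have c: "continuous_on (sphere 0 1) (\<lambda>x. norm (G x))"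
    using bl by (intro continuous_intros) (simp add: linear_continuous_on)
  obtain x0 where x0: "x0 \<in> sphere 0 1" and mx: "\<And>y. y \<in> sphere 0 1 \<Longrightarrow> norm (G y) \<le> norm (G x0)"
    using continuous_attains_sup[OF compact_sphere _ c] by auto
  have n1: "norm x0 = 1" using x0 by simp
  have "onorm G \<le> norm (G x0)"
  proof (rule onorm_le)
    fix x :: 'a
    show "norm (G x) \<le> norm (G x0) * norm x"
    proof (cases "x = 0")
      case True then show ?thesis using bl by (simp add: linear_simps)
    next
      case False
      have "norm (G (x /\<^sub>R norm x)) \<le> norm (G x0)" using mx[of "x /\<^sub>R norm x"] False by simp
      then have "norm (G x) / norm x \<le> norm (G x0)"
        using False bl by (simp add: linear_simps divide_inverse mult.commute)
      then show ?thesis using False by (simp add: divide_le_eq mult.commute)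
    qed
  qed
  moreover have "norm (G x0) \<le> 1" using normG_le[OF bl o, of x0] n1 by simp
  ultimately show ?thesis using n1 o by auto
qed

lemma small_sq:
  fixes a \<delta> :: real
  assumes "0 \<le> a" "a > 1 - \<delta>" "\<delta> > 0"
  shows "1 - a ^ 2 \<le> 2 * \<delta>"
proof (cases "1 - \<delta> \<ge> 0")
  case True
  then have "(1 - \<delta>) ^ 2 \<le> a ^ 2" using assms by (intro power_mono) auto
  then have "1 - a ^ 2 \<le> 1 - (1 - \<delta>) ^ 2" by linarith
  also have "\<dots> = 2 * \<delta> - \<delta> ^ 2" by (simp add: power2_eq_square algebra_simps)
  also have "\<dots> \<le> 2 * \<delta>" by simp
  finally show ?thesis .
next
  case False
  have "1 - a ^ 2 \<le> 1" by simp
  then show ?thesis using False by linarith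
qed

lemma zero_by_eps:
  fixes v :: "'c::real_normed_vector"
  assumes "\<And>\<delta>. \<delta> > 0 \<Longrightarrow> norm v \<le> sqrt (2 * \<delta>) * K" "K \<ge> 0"
  shows "v = 0"
proof -
  have "norm v \<le> 0"
  proof (rule field_le_epsilon)
    fix e :: real assume e: "e > 0"
    define \<delta> where "\<delta> = (e / (K + 1)) ^ 2 / 2"
    have d: "\<delta> > 0" using e assms(2) by (simp add: \<delta>_def)
    have "sqrt (2 * \<delta>) = e / (K + 1)" using e assms(2) by (simp add: \<delta>_def)
    then have "norm v \<le> e / (K + 1) * K" using assms(1)[OF d] by simp
    also have "\<dots> \<le> e" using e assms(2) by (simp add: field_simps)
    finally show "norm v \<le> 0 + e" by simp
  qed
  then show ?thesis by simp
qed

lemma real_part: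
  fixes G :: "'a::euclidean_space \<Rightarrow> 'b::euclidean_space"
  assumes bl: "bounded_linear G" and o: "onorm G = 1" and sp: "rel_spear_R G"
  shows "partial_isometry_R G"
proof -
  have lin: "linear G" using bl bounded_linear.linear by blast
  let ?H = "adjoint G"
  have nG: "norm (G v) \<le> norm v" for v using normG_le[OF bl o] .
  obtain x0 where x0: "norm x0 = 1" "norm (G x0) = 1" using exists_x0[OF bl o] by blast
  have w0: "G z - G (?H (G z)) = 0" for z
  proof (rule ccontr)
    define w where "w = G z - G (?H (G z))"
    assume "G z - G (?H (G z)) \<noteq> 0"
    then have wn: "w \<noteq> 0" by (simp add: w_def)
    define T where "T = (\<lambda>x::'a. (x \<bullet> x0) *\<^sub>R w)"
    have blT: "bounded_linear T" unfolding T_def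
      by (intro bounded_linear_scaleR_left[THEN bounded_linear_compose] bounded_linear_inner_left)
    have Tx0: "T x0 = w" using x0 by (simp add: T_def power2_norm_eq_inner[symmetric])
    have rn: "rel_norm G T \<ge> norm w"
      unfolding rel_norm_def
    proof (rule cINF_greatest)
      show "{0::real<..} \<noteq> {}" by auto
      fix \<delta> :: real assume "\<delta> \<in> {0<..}"
      then have d: "\<delta> > 0" by simp
      show "norm w \<le> Sup {norm (T x) | x. norm x = 1 \<and> norm (G x) > 1 - \<delta>}"
      proof (rule cSup_upper)
        show "norm w \<in> {norm (T x) | x. norm x = 1 \<and> norm (G x) > 1 - \<delta>}"
          using x0 d Tx0 by force
        show "bdd_above {norm (T x) | x. norm x = 1 \<and> norm (G x) > 1 - \<delta>}"
        proof -
          have "norm (T x) \<le> onorm T" if "norm x = 1" for x using onorm[OF blT, of x] that by simp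
          then show ?thesis unfolding bdd_above_def by auto
        qed
      qed
    qed
    define K where "K = norm z + norm w"
    have K0: "K \<ge> 0" by (simp add: K_def)
    have bnd: "\<bar>f (T x)\<bar> \<le> sqrt (2 * \<delta>) * K"
      if "norm x = 1" "f \<in> dual_sphere_R" "f (G x) > 1 - \<delta>" "\<delta> > 0" for x f \<delta>
    proof -
      have blf: "bounded_linear f" and of: "onorm f = 1" using that(2) by (auto simp: dual_sphere_R_def)
      have nf: "\<bar>f y\<bar> \<le> norm y" for y using onorm[OF blf, of y] of by simp
      have nGx: "norm (G x) \<le> 1" using nG[of x] that(1) by simp
      have "f (G x) \<le> norm (G x)" using nf[of "G x"] by simp
      then have "1 - norm (G x) ^ 2 \<le> 2 * \<delta>" using small_sq[of "norm (G x)" \<delta>] that by simp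
      then have s: "sqrt (1 - norm (G x) ^ 2) \<le> sqrt (2 * \<delta>)" by simp
      have "\<bar>f w\<bar> \<le> \<bar>w \<bullet> G x\<bar> + norm w * sqrt (2 * \<delta>)"
        using riesz_est[OF blf nf nGx that(3)] .
      also have "\<bar>w \<bullet> G x\<bar> \<le> sqrt (1 - norm (G x) ^ 2) * norm z"
        using key_ineq[OF bl nG, of x z] that(1) by (simp add: w_def inner_commute)
      also have "\<dots> \<le> sqrt (2 * \<delta>) * norm z" using s by (simp add: mult_right_mono)
      finally have fw: "\<bar>f w\<bar> \<le> sqrt (2 * \<delta>) * K" by (simp add: K_def algebra_simps)
      have ix: "\<bar>x \<bullet> x0\<bar> \<le> 1" using Cauchy_Schwarz_ineq2[of x x0] that(1) x0 by simp
      have lf: "linear f" using blf bounded_linear.linear by blast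
      have "\<bar>f (T x)\<bar> = \<bar>x \<bullet> x0\<bar> * \<bar>f w\<bar>" by (simp add: T_def linear_scale[OF lf] abs_mult)
      also have "\<dots> \<le> 1 * (sqrt (2 * \<delta>) * K)" using ix fw by (intro mult_mono) auto
      finally show ?thesis by simp
    qed
    have sub: "num_range_R G T \<subseteq> {0}"
    proof
      fix v assume v: "v \<in> num_range_R G T"
      have "norm v \<le> sqrt (2 * \<delta>) * K" if d: "\<delta> > 0" for \<delta>
      proof -
        have "v \<in> closure {f (T x) | x f. norm x = 1 \<and> f \<in> dual_sphere_R \<and> f (G x) > 1 - \<delta>}"
          using v d unfolding num_range_R_def by auto
        also have "\<dots> \<subseteq> cball 0 (sqrt (2 * \<delta>) * K)"
        proof (rule closure_minimal)
          show "closed (cball (0::_) (sqrt (2 * \<delta>) * K))" by (rule closed_cball)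
          show "{f (T x) | x f. norm x = 1 \<and> f \<in> dual_sphere_R \<and> f (G x) > 1 - \<delta>} \<subseteq> cball 0 (sqrt (2 * \<delta>) * K)"
          proof (rule subsetI)
            fix u assume "u \<in> {f (T x) | x f. norm x = 1 \<and> f \<in> dual_sphere_R \<and> f (G x) > 1 - \<delta>}"
            then obtain x f where u: "u = f (T x)" and h: "norm x = 1" "f \<in> dual_sphere_R" "f (G x) > 1 - \<delta>"
              by blast
            have "\<bar>f (T x)\<bar> \<le> sqrt (2 * \<delta>) * K" by (rule bnd[OF h d])
            then show "u \<in> cball 0 (sqrt (2 * \<delta>) * K)" using u by simp
          qed
        qed
        finally show ?thesis by simp
      qed
      then have "v = 0" using zero_by_eps K0 by blast
      then show "v \<in> {0}" by simp
    qed
    have f0: "(\<lambda>y. y \<bullet> G x0) \<in> dual_sphere_R"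
    proof -
      have b: "bounded_linear (\<lambda>y. y \<bullet> G x0)" by (rule bounded_linear_inner_left)
      have "onorm (\<lambda>y. y \<bullet> G x0) \<le> 1"
      proof (rule onorm_le)
        fix y show "norm (y \<bullet> G x0) \<le> 1 * norm y" using Cauchy_Schwarz_ineq2[of y "G x0"] x0 by simp
      qed
      moreover have "norm (G x0 \<bullet> G x0) / norm (G x0) \<le> onorm (\<lambda>y. y \<bullet> G x0)"
        using le_onorm[OF b] .
      ultimately show ?thesis using b x0 by (auto simp: dual_sphere_R_def power2_norm_eq_inner[symmetric])
    qed
    have z0: "0 \<in> num_range_R G T"
      unfolding num_range_R_def
    proof (clarify)
      fix \<delta> :: real assume d: "\<delta> > 0"
      have "\<bar>G x0 \<bullet> w\<bar> \<le> sqrt (norm x0 ^ 2 - norm (G x0) ^ 2) * norm z"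
        using key_ineq[OF bl nG, of x0 z] by (simp add: w_def)
      then have "w \<bullet> G x0 = 0" using x0 by (simp add: inner_commute)
      then have e0: "0 = (\<lambda>y. y \<bullet> G x0) (T x0)" using Tx0 by simp
      have e1: "(\<lambda>y. y \<bullet> G x0) (G x0) > 1 - \<delta>" using x0 d by (simp add: power2_norm_eq_inner[symmetric])
      have "\<exists>x f. 0 = f (T x) \<and> norm x = 1 \<and> f \<in> dual_sphere_R \<and> f (G x) > 1 - \<delta>"
        using e0 e1 x0 f0 by (intro exI[of _ x0] exI[of _ "\<lambda>y. y \<bullet> G x0"] conjI) simp_all
      then have "0 \<in> {f (T x) | x f. norm x = 1 \<and> f \<in> dual_sphere_R \<and> f (G x) > 1 - \<delta>}"
        by (simp only: mem_Collect_eq)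
      then show "0 \<in> closure {f (T x) | x f. norm x = 1 \<and> f \<in> dual_sphere_R \<and> f (G x) > 1 - \<delta>}"
        by (rule closure_subset[THEN subsetD])
    qed
    have "num_range_R G T = {0}" using sub z0 by blast
    then have "num_radius_R G T = 0" by (simp add: num_radius_R_def)
    moreover have "num_radius_R G T = rel_norm G T" using sp blT by (simp add: rel_spear_R_def)
    ultimately show False using rn wn by simp
  qed
  have HGHG: "?H (G (?H (G z))) = ?H (G z)" for z using w0[of z] by simp
  show ?thesis unfolding partial_isometry_R_def orth_proj_R_def
  proof (intro conjI allI)
    show "linear (?H \<circ> G)" using adjoint_linear[OF lin] lin by (simp add: linear_compose)
    show "(?H \<circ> G) \<circ> (?H \<circ> G) = ?H \<circ> G" by (rule ext) (simp add: HGHG)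
    fix x y
    show "(?H \<circ> G) x \<bullet> y = x \<bullet> (?H \<circ> G) y"
      using adjoint_clauses[OF lin] by simp
  qed
qed


lemma smul_nth[simp]: "(c *s x) $ i = c * x $ i"
  by (simp add: vector_scalar_mult_def)

lemma scaleR_nth_c: "(r *\<^sub>R (x::complex^'n)) $ i = of_real r * x $ i"
  by (simp only: vector_scaleR_component) (simp add: scaleR_conv_of_real)

lemma cinner_re: "Re (cinner x y) = x \<bullet> y"
  by (simp add: cinner_def inner_vec_def inner_complex_def Re_sum)

lemma cinner_im: "Im (cinner x y) = - ((\<i> *s x) \<bullet> y)"
  by (simp add: cinner_def inner_vec_def inner_complex_def Im_sum sum_negf[symmetric] algebra_simps)

lemma cinner_eq: "cinner x y = Complex (x \<bullet> y) (- ((\<i> *s x) \<bullet> y))"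
  by (simp add: complex_eq_iff cinner_re cinner_im)

lemma cinner_add_left: "cinner (x + y) z = cinner x z + cinner y z"
  by (simp add: cinner_def distrib_right sum.distrib)

lemma cinner_smul_left: "cinner (c *s x) z = c * cinner x z"
  by (simp add: cinner_def sum_distrib_left mult.assoc)

lemma cinner_scaleR_left: "cinner (r *\<^sub>R x) z = of_real r * cinner x z"
  by (simp add: cinner_def sum_distrib_left mult.assoc scaleR_nth_c) (simp add: scaleR_conv_of_real)

lemma inner_smul_right: "(x :: complex ^ 'n) \<bullet> (c *s v) = (cnj c *s x) \<bullet> v"
  by (simp add: inner_vec_def inner_complex_def algebra_simps)

lemma norm_smul: "norm (c *s (x :: complex ^ 'n)) = cmod c * norm x"
  by (simp add: norm_vec_def norm_mult L2_set_right_distrib)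

lemma cinner_self: "cinner x x = of_real (norm x ^ 2)"
proof -
  have "(\<i> *s x) \<bullet> x = 0" by (simp add: inner_vec_def inner_complex_def algebra_simps)
  then show ?thesis by (simp add: complex_eq_iff cinner_re cinner_im power2_norm_eq_inner)
qed

lemma cinner_cs: "cmod (cinner x y) \<le> norm x * norm y"
proof (cases "cinner x y = 0")
  case True then show ?thesis by simp
next
  case False
  define a where "a = cinner x y"
  define c where "c = cnj a / of_real (cmod a)"
  have ca: "c * a = of_real (cmod a)" using False
    by (simp add: c_def a_def complex_mult_cnj[symmetric] field_simps cmod_power2 power2_eq_square)
      (metis complex_mod_mult_cnj complex_norm_square mult.commute of_real_mult power2_eq_square)
  have cc: "cmod c = 1" using False by (simp add: c_def a_def norm_divide)
  have "cmod a = Re (cinner (c *s x) y)" by (simp add: cinner_smul_left a_def[symmetric] ca)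
  also have "\<dots> = (c *s x) \<bullet> y" by (simp add: cinner_re)
  also have "\<dots> \<le> norm (c *s x) * norm y" by (rule norm_cauchy_schwarz)
  also have "\<dots> = norm x * norm y" by (simp add: norm_smul cc)
  finally show ?thesis by (simp add: a_def)
qed

lemma linear_cinner_left: "linear (\<lambda>x. cinner x u)"
  by (rule linearI) (simp_all add: cinner_add_left cinner_scaleR_left, simp add: scaleR_conv_of_real)

lemma bl_cinner_left: "bounded_linear (\<lambda>x::complex^'n. cinner x u)"
  using linear_cinner_left linear_conv_bounded_linear by blast

lemma bl_T:
  "bounded_linear (\<lambda>x::complex^'n. cinner x x0 *s (w::complex^'m))"
proof -
  have "linear (\<lambda>x::complex^'n. cinner x x0 *s (w::complex^'m))"
    by (rule linearI) (simp_all add: cinner_add_left cinner_scaleR_left vec_eq_iff algebra_simps scaleR_nth_c, simp add: scaleR_conv_of_real)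
  then show ?thesis using linear_conv_bounded_linear by blast
qed

lemma adj_hom:
  fixes G :: "complex ^ 'n \<Rightarrow> complex ^ 'm"
  assumes bl: "bounded_linear G" and hom: "\<And>c x. G (c *s x) = c *s G x"
  shows "adjoint G (c *s y) = c *s adjoint G y"
proof -
  have lin: "linear G" using bl bounded_linear.linear by blast
  have "x \<bullet> adjoint G (c *s y) = x \<bullet> (c *s adjoint G y)" for x
  proof -
    have "x \<bullet> adjoint G (c *s y) = G x \<bullet> (c *s y)" by (rule adjoint_clauses(1)[OF lin])
    also have "\<dots> = (cnj c *s G x) \<bullet> y" by (rule inner_smul_right)
    also have "\<dots> = G (cnj c *s x) \<bullet> y" by (simp add: hom)
    also have "\<dots> = (cnj c *s x) \<bullet> adjoint G y" by (rule adjoint_clauses(1)[OF lin, symmetric])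
    also have "\<dots> = x \<bullet> (c *s adjoint G y)" by (simp add: inner_smul_right)
    finally show ?thesis .
  qed
  then show ?thesis using vector_eq_ldot by blast
qed

lemma cadj_eq:
  fixes G :: "complex ^ 'n \<Rightarrow> complex ^ 'm"
  assumes bl: "bounded_linear G" and hom: "\<And>c x. G (c *s x) = c *s G x"
  shows "cadjoint G = adjoint G"
proof (rule ext)
  fix y
  have lin: "linear G" using bl bounded_linear.linear by blast
  have P: "\<forall>x. cinner (G x) y = cinner x (adjoint G y)"
  proof
    fix x
    have "G x \<bullet> y = x \<bullet> adjoint G y" using adjoint_clauses(1)[OF lin] by simp
    moreover have "(\<i> *s G x) \<bullet> y = (\<i> *s x) \<bullet> adjoint G y"
      using adjoint_clauses(1)[OF lin, of "\<i> *s x" y] by (simp add: hom)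
    ultimately show "cinner (G x) y = cinner x (adjoint G y)" by (simp add: cinner_eq)
  qed
  show "cadjoint G y = adjoint G y"
    unfolding cadjoint_def
  proof (rule some_equality)
    show "\<forall>x. cinner (G x) y = cinner x (adjoint G y)" by (rule P)
    fix z assume "\<forall>x. cinner (G x) y = cinner x z"
    then have "\<forall>x. x \<bullet> z = x \<bullet> adjoint G y" using P by (metis cinner_re)
    then show "z = adjoint G y" using vector_eq_ldot by blast
  qed
qed

lemma complex_part:
  fixes G :: "complex ^ 'n \<Rightarrow> complex ^ 'm"
  assumes cl: "clinear_op G" and o: "onorm G = 1" and sp: "rel_spear_C G"
  shows "partial_isometry_C G"
proof -
  have bl: "bounded_linear G" and hom: "\<And>c x. G (c *s x) = c *s G x" using cl by (auto simp: clinear_op_def)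
  have lin: "linear G" using bl bounded_linear.linear by blast
  let ?H = "adjoint G"
  have homH: "?H (c *s y) = c *s ?H y" for c y using adj_hom[OF bl hom] .
  have nG: "norm (G v) \<le> norm v" for v using normG_le[OF bl o] .
  obtain x0 where x0: "norm x0 = 1" "norm (G x0) = 1" using exists_x0[OF bl o] by blast
  have w0: "G z - G (?H (G z)) = 0" for z
  proof (rule ccontr)
    define w where "w = G z - G (?H (G z))"
    assume "G z - G (?H (G z)) \<noteq> 0"
    then have wn: "w \<noteq> 0" by (simp add: w_def)
    have iw: "\<i> *s w = G (\<i> *s z) - G (?H (G (\<i> *s z)))"
      by (simp add: w_def hom homH vec_eq_iff algebra_simps)
    have niz: "norm (\<i> *s z) = norm z" by (simp add: norm_smul)
    have niw: "norm (\<i> *s w) = norm w" by (simp add: norm_smul)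
    define T where "T = (\<lambda>x::complex^'n. cinner x x0 *s w)"
    have blT: "bounded_linear T" unfolding T_def by (rule bl_T)
    have clT: "clinear_op T" using blT by (simp add: clinear_op_def T_def cinner_smul_left vec_eq_iff)
    have Tx0: "T x0 = w" using x0 by (simp add: T_def cinner_self vec_eq_iff)
    have rn: "rel_norm G T \<ge> norm w"
      unfolding rel_norm_def
    proof (rule cINF_greatest)
      show "{0::real<..} \<noteq> {}" by auto
      fix \<delta> :: real assume "\<delta> \<in> {0<..}"
      then have d: "\<delta> > 0" by simp
      show "norm w \<le> Sup {norm (T x) | x. norm x = 1 \<and> norm (G x) > 1 - \<delta>}"
      proof (rule cSup_upper)
        show "norm w \<in> {norm (T x) | x. norm x = 1 \<and> norm (G x) > 1 - \<delta>}"
          using x0 d Tx0 by force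
        show "bdd_above {norm (T x) | x. norm x = 1 \<and> norm (G x) > 1 - \<delta>}"
        proof -
          have "norm (T x) \<le> onorm T" if "norm x = 1" for x using onorm[OF blT, of x] that by simp
          then show ?thesis unfolding bdd_above_def by auto
        qed
      qed
    qed
    define K where "K = 2 * (norm z + norm w)"
    have K0: "K \<ge> 0" by (simp add: K_def)
    have bnd: "norm (f (T x)) \<le> sqrt (2 * \<delta>) * K"
      if "norm x = 1" "f \<in> dual_sphere_C" "Re (f (G x)) > 1 - \<delta>" "\<delta> > 0" for x f \<delta>
    proof -
      have blf: "bounded_linear f" and homf: "\<And>c x. f (c *s x) = c * f x" and of: "onorm f = 1"
        using that(2) by (auto simp: dual_sphere_C_def)
      define g where "g = (\<lambda>y. Re (f y))"
      have blg: "bounded_linear g" unfolding g_def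
        using bounded_linear_compose[OF bounded_linear_Re blf] by (simp add: o_def)
      have nf: "cmod (f y) \<le> norm y" for y using onorm[OF blf, of y] of by simp
      have ng: "\<bar>g y\<bar> \<le> norm y" for y using nf[of y] abs_Re_le_cmod[of "f y"] by (simp add: g_def)
      have nGx: "norm (G x) \<le> 1" using nG[of x] that(1) by simp
      have gG: "g (G x) > 1 - \<delta>" using that(3) by (simp add: g_def)
      have "g (G x) \<le> norm (G x)" using ng[of "G x"] by simp
      then have "1 - norm (G x) ^ 2 \<le> 2 * \<delta>" using small_sq[of "norm (G x)" \<delta>] that gG by simp
      then have s: "sqrt (1 - norm (G x) ^ 2) \<le> sqrt (2 * \<delta>)" by simp
      have est: "\<bar>g (G u - G (?H (G u)))\<bar> \<le> sqrt (2 * \<delta>) * (norm u + norm (G u - G (?H (G u))))" for u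
      proof -
        have "\<bar>g (G u - G (?H (G u)))\<bar> \<le> \<bar>(G u - G (?H (G u))) \<bullet> G x\<bar> + norm (G u - G (?H (G u))) * sqrt (2 * \<delta>)"
          using riesz_est[OF blg ng nGx gG] .
        also have "\<bar>(G u - G (?H (G u))) \<bullet> G x\<bar> \<le> sqrt (1 - norm (G x) ^ 2) * norm u"
          using key_ineq[OF bl nG, of x u] that(1) by (simp add: inner_commute)
        also have "\<dots> \<le> sqrt (2 * \<delta>) * norm u" using s by (simp add: mult_right_mono)
        finally show ?thesis by (simp add: algebra_simps)
      qed
      have e1: "\<bar>Re (f w)\<bar> \<le> sqrt (2 * \<delta>) * (norm z + norm w)"
        using est[of z] by (simp add: g_def w_def)
      have e2: "\<bar>Re (f (\<i> *s w))\<bar> \<le> sqrt (2 * \<delta>) * (norm z + norm w)"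
        using est[of "\<i> *s z"] by (simp add: g_def iw[symmetric] niz niw)
      have "Im (f w) = - Re (f (\<i> *s w))" by (simp add: homf)
      then have "cmod (f w) \<le> \<bar>Re (f w)\<bar> + \<bar>Re (f (\<i> *s w))\<bar>" using cmod_le[of "f w"] by simp
      also have "\<dots> \<le> sqrt (2 * \<delta>) * K" using e1 e2 by (simp add: K_def algebra_simps)
      finally have fw: "cmod (f w) \<le> sqrt (2 * \<delta>) * K" .
      have ix: "cmod (cinner x x0) \<le> 1" using cinner_cs[of x x0] that(1) x0 by simp
      have "norm (f (T x)) = cmod (cinner x x0) * cmod (f w)" by (simp add: T_def homf norm_mult)
      also have "\<dots> \<le> 1 * (sqrt (2 * \<delta>) * K)" using ix fw by (intro mult_mono) auto
      finally show ?thesis by simp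
    qed
    have sub: "num_range_C G T \<subseteq> {0}"
    proof
      fix v assume v: "v \<in> num_range_C G T"
      have "norm v \<le> sqrt (2 * \<delta>) * K" if d: "\<delta> > 0" for \<delta>
      proof -
        have "v \<in> closure {f (T x) | x f. norm x = 1 \<and> f \<in> dual_sphere_C \<and> Re (f (G x)) > 1 - \<delta>}"
          using v d unfolding num_range_C_def by auto
        also have "\<dots> \<subseteq> cball 0 (sqrt (2 * \<delta>) * K)"
        proof (rule closure_minimal)
          show "closed (cball (0::_) (sqrt (2 * \<delta>) * K))" by (rule closed_cball)
          show "{f (T x) | x f. norm x = 1 \<and> f \<in> dual_sphere_C \<and> Re (f (G x)) > 1 - \<delta>} \<subseteq> cball 0 (sqrt (2 * \<delta>) * K)"
          proof (rule subsetI)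
            fix u assume "u \<in> {f (T x) | x f. norm x = 1 \<and> f \<in> dual_sphere_C \<and> Re (f (G x)) > 1 - \<delta>}"
            then obtain x f where u: "u = f (T x)" and h: "norm x = 1" "f \<in> dual_sphere_C" "Re (f (G x)) > 1 - \<delta>"
              by blast
            have "norm (f (T x)) \<le> sqrt (2 * \<delta>) * K" by (rule bnd[OF h d])
            then show "u \<in> cball 0 (sqrt (2 * \<delta>) * K)" using u by simp
          qed
        qed
        finally show ?thesis by simp
      qed
      then have "v = 0" using zero_by_eps K0 by blast
      then show "v \<in> {0}" by simp
    qed
    have f0: "(\<lambda>y. cinner y (G x0)) \<in> dual_sphere_C"
    proof -
      have b: "bounded_linear (\<lambda>y. cinner y (G x0))" by (rule bl_cinner_left)
      have "onorm (\<lambda>y. cinner y (G x0)) \<le> 1"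
      proof (rule onorm_le)
        fix y show "norm (cinner y (G x0)) \<le> 1 * norm y" using cinner_cs[of y "G x0"] x0 by simp
      qed
      moreover have "norm (cinner (G x0) (G x0)) / norm (G x0) \<le> onorm (\<lambda>y. cinner y (G x0))"
        using le_onorm[OF b] .
      ultimately show ?thesis using b x0
        by (auto simp: dual_sphere_C_def cinner_self cinner_smul_left)
    qed
    have z0: "0 \<in> num_range_C G T"
      unfolding num_range_C_def
    proof (clarify)
      fix \<delta> :: real assume d: "\<delta> > 0"
      have a1: "\<bar>G x0 \<bullet> w\<bar> \<le> sqrt (norm x0 ^ 2 - norm (G x0) ^ 2) * norm z"
        using key_ineq[OF bl nG, of x0 z] by (simp add: w_def)
      have a2: "\<bar>G x0 \<bullet> (\<i> *s w)\<bar> \<le> sqrt (norm x0 ^ 2 - norm (G x0) ^ 2) * norm (\<i> *s z)"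
        unfolding iw by (rule key_ineq[OF bl nG])
      have "cinner w (G x0) = 0" using a1 a2 x0 by (simp add: cinner_eq inner_commute complex_eq_iff)
      then have e0: "0 = (\<lambda>y. cinner y (G x0)) (T x0)" using Tx0 by simp
      have e1: "Re ((\<lambda>y. cinner y (G x0)) (G x0)) > 1 - \<delta>" using x0 d by (simp add: cinner_self)
      have "\<exists>x f. 0 = f (T x) \<and> norm x = 1 \<and> f \<in> dual_sphere_C \<and> Re (f (G x)) > 1 - \<delta>"
        using e0 e1 x0 f0 by (intro exI[of _ x0] exI[of _ "\<lambda>y. cinner y (G x0)"] conjI) simp_all
      then have "0 \<in> {f (T x) | x f. norm x = 1 \<and> f \<in> dual_sphere_C \<and> Re (f (G x)) > 1 - \<delta>}"
        by (simp only: mem_Collect_eq)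
      then show "0 \<in> closure {f (T x) | x f. norm x = 1 \<and> f \<in> dual_sphere_C \<and> Re (f (G x)) > 1 - \<delta>}"
        by (rule closure_subset[THEN subsetD])
    qed
    have "num_range_C G T = {0}" using sub z0 by blast
    then have "num_radius_C G T = 0" by (simp add: num_radius_C_def)
    moreover have "num_radius_C G T = rel_norm G T" using sp clT by (simp add: rel_spear_C_def)
    ultimately show False using rn wn by simp
  qed
  have HGHG: "?H (G (?H (G z))) = ?H (G z)" for z using w0[of z] by simp
  have linH: "linear ?H" using adjoint_linear[OF lin] .
  have blHG: "bounded_linear (?H \<circ> G)"
    using linH lin linear_compose linear_conv_bounded_linear by blast
  show ?thesis unfolding partial_isometry_C_def orth_proj_C_def cadj_eq[OF bl hom]
  proof (intro conjI allI)
    show "clinear_op (?H \<circ> G)" using blHG by (simp add: clinear_op_def hom homH)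
    show "(?H \<circ> G) \<circ> (?H \<circ> G) = ?H \<circ> G" by (rule ext) (simp add: HGHG)
    fix x y
    have "(?H (G x)) \<bullet> y = x \<bullet> ?H (G y)" using adjoint_clauses[OF lin] by simp
    moreover have "(\<i> *s ?H (G x)) \<bullet> y = (\<i> *s x) \<bullet> ?H (G y)"
    proof -
      have "\<i> *s ?H (G x) = ?H (G (\<i> *s x))" by (simp add: hom homH)
      then show ?thesis
        using adjoint_clauses(2)[OF lin, of "G (\<i> *s x)" y] adjoint_clauses(1)[OF lin, of "\<i> *s x" "G y"]
        by simp
    qed
    ultimately show "cinner ((?H \<circ> G) x) y = cinner x ((?H \<circ> G) y)" by (simp add: cinner_eq)
  qed
qed

theorem theorem3p12:
  shows "(\<forall>G :: 'a::euclidean_space \<Rightarrow> 'b::euclidean_space.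
            bounded_linear G \<and> onorm G = 1 \<and> rel_spear_R G \<longrightarrow> partial_isometry_R G)
       \<and> (\<forall>G :: complex ^ 'n \<Rightarrow> complex ^ 'm.
            clinear_op G \<and> onorm G = 1 \<and> rel_spear_C G \<longrightarrow> partial_isometry_C G)"
  using real_part complex_part by blast

end
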